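(* Let $f$ and $g$ be convex, continuous, decreasing, symmetric trade-off functions, with $g$ strictly decreasing on $[0,1]$, and let $a^*$ be the fixed point $g(a^* )=a^*$. Suppose $0<\delta<a^*$ and $$f(a)\ge g(a+\delta)-\delta\quad\text{for all }a\in[a^*-\delta,1-\delta].$$ Let $h(a)=\max\{g(a+\delta)-\delta,0\}$, $\hat\delta=\max\{\delta/a^*,\,(1-g(\delta))+\delta\}$, and $k(a)=(1-\hat\delta)\,g\big(\frac{a}{1-\hat\delta}\big)$ for $a\le1-\hat\delta$, $k(a)=0$ for $a\ge1-\hat\delta$. Then $h$ and $k$ are convex, continuous, decreasing, symmetric trade-off functions, and for all $a\in[0,1]$, $$f(a)\ge h(a)\ge k(a)=(g\otimes f_{0,\hat\delta})(a),$$ where $f_{0,\hat\delta}(a)=\max\{1-a-\hat\delta,0\}$ is the trade-off function of $U(0,1)$ versus $U(\hat\delta,1+\hat\delta)$.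
   Context: For distributions $P,Q$ the trade-off function is $T(P,Q)(a)=\inf\{\beta(\phi):\alpha(\phi)\le a\}$ over rejection rules $\phi$ with $\alpha(\phi)=\mathbb E_P[\phi]$, $\beta(\phi)=1-\mathbb E_Q[\phi]$; trade-off functions are exactly the convex, continuous, non-increasing $f:[0,1]\to[0,1]$ with $f(a)\le1-a$. A trade-off function $g$ is symmetric if $g=g^{-1}$, where $g^{-1}(a)=\inf\{t\in[0,1]:g(t)\le a\}$. For $f=T(P,Q)$, $g=T(P',Q')$, $f\otimes g=T(P\times P',Q\times Q')$. *)

theory Defs
  imports "HOL-Probability.Probability"
begin

definition tradeoff :: "'a measure \<Rightarrow> 'a measure \<Rightarrow> real \<Rightarrow> real" where
  "tradeoff P Q a = Inf {1 - (\<integral>x. \<phi> x \<partial>Q) | \<phi>.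
      \<phi> \<in> borel_measurable P \<and> (\<forall>x\<in>space P. 0 \<le> \<phi> x \<and> \<phi> x \<le> 1)
      \<and> (\<integral>x. \<phi> x \<partial>P) \<le> a}"

text \<open>Trade-off functions on [0,1], via the characterisation recalled in the paper:
  convex, continuous, non-increasing, valued in [0,1], with f a \<le> 1 - a.\<close>
definition is_tradeoff :: "(real \<Rightarrow> real) \<Rightarrow> bool" where
  "is_tradeoff f \<longleftrightarrow> convex_on {0..1} f \<and> continuous_on {0..1} f
     \<and> (\<forall>x\<in>{0..1}. \<forall>y\<in>{0..1}. x \<le> y \<longrightarrow> f y \<le> f x)
     \<and> (\<forall>a\<in>{0..1}. 0 \<le> f a \<and> f a \<le> 1 - a)"

definition tinv :: "(real \<Rightarrow> real) \<Rightarrow> real \<Rightarrow> real" where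
  "tinv g a = Inf {t \<in> {0..1}. g t \<le> a}"

definition symmetric_tradeoff :: "(real \<Rightarrow> real) \<Rightarrow> bool" where
  "symmetric_tradeoff g \<longleftrightarrow> (\<forall>a\<in>{0..1}. g a = tinv g a)"

definition unif :: "real \<Rightarrow> real measure" where
  "unif l = uniform_measure lborel {l..l+1}"

end

theory Submission
  imports Defs
begin


lemma tinv_eq:
  assumes "t0 \<in> {0..1}" "H t0 \<le> b" "\<And>t. t \<in> {0..1} \<Longrightarrow> H t \<le> b \<Longrightarrow> t0 \<le> t"
  shows "tinv H b = t0"
  unfolding tinv_def using assms by (intro cInf_eq_minimum) auto

lemma g_facts:
  assumes g_tr: "is_tradeoff g" and g_sym: "symmetric_tradeoff g"
    and g_strict: "\<forall>x\<in>{0..1}. \<forall>y\<in>{0..1}. x < y \<longrightarrow> g y < g x"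
  shows "g 1 = 0" "g 0 = 1" "\<And>x. x \<in> {0..1} \<Longrightarrow> g (g x) = x"
    "\<And>x. x \<in> {0..1} \<Longrightarrow> g x \<in> {0..1}"
proof -
  have cont: "continuous_on {0..1} g" and mono: "\<forall>x\<in>{0..1}. \<forall>y\<in>{0..1}. x \<le> y \<longrightarrow> g y \<le> g x"
    and rng: "\<forall>a\<in>{0..1}. 0 \<le> g a \<and> g a \<le> 1 - a" using g_tr unfolding is_tradeoff_def by auto
  show g1: "g 1 = 0" using rng[rule_format, of 1] by auto
  have "g 0 = tinv g 0" using g_sym unfolding symmetric_tradeoff_def by auto
  also have "\<dots> = 1"
  proof (rule tinv_eq)
    fix t assume t: "t \<in> {0..1}" "g t \<le> 0"
    show "1 \<le> t"
    proof (rule ccontr)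
      assume "\<not> 1 \<le> t" then have "g 1 < g t" using g_strict t by auto
      then show False using g1 t by simp
    qed
  qed (use g1 in auto)
  finally show g0: "g 0 = 1" .
  show "g x \<in> {0..1}" if "x \<in> {0..1}" for x using rng that by force
  show "g (g x) = x" if x: "x \<in> {0..1}" for x
  proof -
    obtain t where t: "0 \<le> t" "t \<le> 1" "g t = x"
      using IVT2'[of g 1 x 0] cont g0 g1 x by auto
    have "g x = tinv g x" using g_sym x unfolding symmetric_tradeoff_def by auto
    also have "\<dots> = t"
    proof (rule tinv_eq)
      fix t' assume t': "t' \<in> {0..1}" "g t' \<le> x"
      show "t \<le> t'"
      proof (rule ccontr)
        assume "\<not> t \<le> t'" then have "g t < g t'" using g_strict[rule_format, of t' t] t t' by auto
        then show False using t t' by simp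
      qed
    qed (use t in auto)
    finally show ?thesis using t by simp
  qed
qed

lemma core_reflect:
  assumes F_tr: "is_tradeoff F" and F_sym: "symmetric_tradeoff F"
    and H_tr: "is_tradeoff H" and H_sym: "symmetric_tradeoff H"
    and a: "a \<in> {0..1}" and lt: "F a < H a"
  shows "F a \<in> {0..1}" "F (F a) \<le> a" "a < H (F a)"
proof -
  have Fr: "\<forall>a\<in>{0..1}. 0 \<le> F a \<and> F a \<le> 1 - a" using F_tr unfolding is_tradeoff_def by auto
  have Hr: "\<forall>a\<in>{0..1}. 0 \<le> H a \<and> H a \<le> 1 - a"
    and Hc: "continuous_on {0..1} H"
    and Hm: "\<forall>x\<in>{0..1}. \<forall>y\<in>{0..1}. x \<le> y \<longrightarrow> H y \<le> H x"
    using H_tr unfolding is_tradeoff_def by auto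
  define y where "y = F a"
  show y01: "F a \<in> {0..1}" using Fr a by force
  have "F y = tinv F y" using F_sym y01 unfolding symmetric_tradeoff_def y_def by auto
  also have "\<dots> \<le> a" unfolding tinv_def y_def
    by (rule cInf_lower) (use a in auto)
  finally show "F (F a) \<le> a" unfolding y_def .
  have "H a - y > 0" using lt y_def by simp
  then obtain e where e: "e > 0" "\<forall>x'\<in>{0..1}. dist x' a < e \<longrightarrow> dist (H x') (H a) < H a - y"
    using Hc a unfolding continuous_on_iff by metis
  have H1: "H 1 \<le> y" using Hr[rule_format, of 1] y01 y_def by auto
  have "H y = tinv H y" using H_sym y01 unfolding symmetric_tradeoff_def y_def by auto
  also have "\<dots> \<ge> min (a + e) 1" unfolding tinv_def
  proof (rule cInf_greatest)
    show "{t \<in> {0..1}. H t \<le> y} \<noteq> {}" using H1 by auto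
    fix t assume t: "t \<in> {t \<in> {0..1}. H t \<le> y}"
    show "min (a + e) 1 \<le> t"
    proof (rule ccontr)
      assume "\<not> min (a + e) 1 \<le> t"
      then have "t < a + e" by auto
      show False
      proof (cases "t \<le> a")
        case True then have "H a \<le> H t" using Hm t a by auto
        then show False using t lt y_def by auto
      next
        case False then have "dist t a < e" using \<open>t < a + e\<close> by (simp add: dist_real_def)
        then have "dist (H t) (H a) < H a - y" using e t by auto
        then show False using t by (auto simp: dist_real_def)
      qed
    qed
  qed
  finally have "min (a + e) 1 \<le> H y" .
  moreover have "a < 1"
  proof (rule ccontr)
    assume "\<not> a < 1" then have "a = 1" using a by auto
    then show False using lt Hr[rule_format, of 1] Fr[rule_format, of 1] by auto
  qed
  ultimately show "a < H (F a)" using e y_def by auto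
qed

lemma reflect_up:
  assumes F_tr: "is_tradeoff F" and F_sym: "symmetric_tradeoff F"
    and H_tr: "is_tradeoff H" and H_sym: "symmetric_tradeoff H"
    and c: "c \<in> {0..1}" and Hc: "H c \<ge> c" and ge: "\<forall>a\<in>{c..1}. H a \<le> F a"
    and a: "a \<in> {0..1}"
  shows "H a \<le> F a"
proof (rule ccontr)
  assume "\<not> H a \<le> F a" then have lt: "F a < H a" by simp
  note cr = core_reflect[OF F_tr F_sym H_tr H_sym a lt]
  have "a < c"
  proof (rule ccontr)
    assume "\<not> a < c" then have "a \<in> {c..1}" using a by auto
    then have "H a \<le> F a" using ge by blast
    then show False using lt by simp
  qed
  then have "F c \<le> F a" using F_tr a c unfolding is_tradeoff_def by auto
  then have "c \<le> F a" using Hc ge c by force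
  then have "H (F a) \<le> F (F a)" using ge cr(1) by auto
  then show False using cr by linarith
qed

lemma reflect_down:
  assumes F_tr: "is_tradeoff F" and F_sym: "symmetric_tradeoff F"
    and H_tr: "is_tradeoff H" and H_sym: "symmetric_tradeoff H"
    and c: "c \<in> {0..1}" and Hc: "H c \<le> c" and ge: "\<forall>a\<in>{0..c}. H a \<le> F a"
    and a: "a \<in> {0..1}"
  shows "H a \<le> F a"
proof (rule ccontr)
  assume "\<not> H a \<le> F a" then have lt: "F a < H a" by simp
  note cr = core_reflect[OF F_tr F_sym H_tr H_sym a lt]
  have "c < a"
  proof (rule ccontr)
    assume "\<not> c < a" then have "a \<in> {0..c}" using a by auto
    then have "H a \<le> F a" using ge by blast
    then show False using lt by simp
  qed
  then have "H a \<le> H c" using H_tr a c unfolding is_tradeoff_def by auto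
  then have "F a \<le> c" using Hc lt by linarith
  then have "H (F a) \<le> F (F a)" using ge cr(1) by auto
  then show False using cr by linarith
qed

lemma comp_convex:
  assumes g_tr: "is_tradeoff g" and p: "p \<ge> 0" and q: "q \<ge> 0" and c: "c \<ge> 0"
  shows "convex_on {0..1} (\<lambda>a. max (c * g (min (p*a+q) 1) - e) 0)"
proof (rule convex_onI)
  have gc: "convex_on {0..1} g"
    and gm: "\<forall>x\<in>{0..1}. \<forall>y\<in>{0..1}. x \<le> y \<longrightarrow> g y \<le> g x"
    using g_tr unfolding is_tradeoff_def by auto
  fix t x y :: real assume t: "0 < t" "t < 1" and x: "x \<in> {0..1}" and y: "y \<in> {0..1}"
  define m where "m z = min (p*z+q) 1" for z
  have m01: "m z \<in> {0..1}" if "z \<ge> 0" for z using p q that unfolding m_def by auto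
  have w: "(1 - t) * m x + t * m y \<le> m ((1 - t) *\<^sub>R x + t *\<^sub>R y)"
  proof -
    have "(1 - t) * m x + t * m y \<le> (1 - t) * (p*x+q) + t * (p*y+q)"
      using t unfolding m_def by (intro add_mono mult_left_mono) auto
    moreover have "(1 - t) * m x + t * m y \<le> (1 - t) * 1 + t * 1"
      using t unfolding m_def by (intro add_mono mult_left_mono) auto
    ultimately show ?thesis unfolding m_def by (auto simp: algebra_simps)
  qed
  have w01: "(1 - t) * m x + t * m y \<in> {0..1}"
    using m01[of x] m01[of y] x y t by (auto intro: convex_bound_le)
  have "g (m ((1 - t) *\<^sub>R x + t *\<^sub>R y)) \<le> g ((1 - t) * m x + t * m y)"
    using gm w w01 m01[of "(1 - t) *\<^sub>R x + t *\<^sub>R y"] x y t by auto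
  also have "\<dots> \<le> (1 - t) * g (m x) + t * g (m y)"
    using convex_onD[OF gc, of t "m x" "m y"] t m01[of x] m01[of y] x y by auto
  finally have "c * g (m ((1 - t) *\<^sub>R x + t *\<^sub>R y)) \<le> c * ((1 - t) * g (m x) + t * g (m y))"
    using c by (rule mult_left_mono)
  then have "c * g (m ((1 - t) *\<^sub>R x + t *\<^sub>R y)) - e \<le> (1 - t) * (c * g (m x) - e) + t * (c * g (m y) - e)"
    by (simp add: algebra_simps)
  also have "\<dots> \<le> (1 - t) * max (c * g (m x) - e) 0 + t * max (c * g (m y) - e) 0"
    using t by (intro add_mono mult_left_mono) auto
  finally show "max (c * g (min (p * ((1 - t) *\<^sub>R x + t *\<^sub>R y) + q) 1) - e) 0
       \<le> (1 - t) * max (c * g (min (p * x + q) 1) - e) 0 + t * max (c * g (min (p * y + q) 1) - e) 0"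
    unfolding m_def using t by auto
qed (auto)

lemma convex_on_eq01:
  assumes "convex_on {0..1::real} F" "\<And>x. x \<in> {0..1} \<Longrightarrow> G x = F x"
  shows "convex_on {0..1} G"
proof (rule convex_onI)
  fix t x y :: real assume t: "0 < t" "t < 1" and x: "x \<in> {0..1}" and y: "y \<in> {0..1}"
  have "(1 - t) *\<^sub>R x + t *\<^sub>R y \<in> {0..1}" using t x y by (auto intro: convex_bound_le)
  then show "G ((1 - t) *\<^sub>R x + t *\<^sub>R y) \<le> (1 - t) * G x + t * G y"
    using convex_onD[OF assms(1), of t x y] t x y assms(2) by auto
qed auto

lemma real_part:
  fixes f g h k :: "real \<Rightarrow> real" and \<delta> astar dhat :: real
  assumes f_tr: "is_tradeoff f" and f_sym: "symmetric_tradeoff f"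
    and g_tr: "is_tradeoff g" and g_sym: "symmetric_tradeoff g"
    and g_strict: "\<forall>x\<in>{0..1}. \<forall>y\<in>{0..1}. x < y \<longrightarrow> g y < g x"
    and astar: "0 \<le> astar" "astar \<le> 1" "g astar = astar"
    and \<delta>: "0 < \<delta>" "\<delta> < astar"
    and hyp: "\<forall>a\<in>{astar - \<delta>..1 - \<delta>}. f a \<ge> g (a + \<delta>) - \<delta>"
    and h_def: "\<And>a. h a = max (g (min (a + \<delta>) 1) - \<delta>) 0"
    and dhat_def: "dhat = max (\<delta> / astar) ((1 - g \<delta>) + \<delta>)"
    and k_def: "\<And>a. k a = (if a \<le> 1 - dhat then (1 - dhat) * g (a / (1 - dhat)) else 0)"
  shows "is_tradeoff h \<and> symmetric_tradeoff h \<and> is_tradeoff k \<and> symmetric_tradeoff k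
    \<and> (\<forall>a\<in>{0..1}. f a \<ge> h a \<and> h a \<ge> k a)"
proof -
  note gf = g_facts[OF g_tr g_sym g_strict]
  have gc: "convex_on {0..1} g" and gcont: "continuous_on {0..1} g"
    and gm: "\<forall>x\<in>{0..1}. \<forall>y\<in>{0..1}. x \<le> y \<longrightarrow> g y \<le> g x"
    and grng: "\<forall>a\<in>{0..1}. 0 \<le> g a \<and> g a \<le> 1 - a"
    using g_tr unfolding is_tradeoff_def by auto
  have gmono: "g y \<le> g x" if "0 \<le> x" "x \<le> y" "y \<le> 1" for x y using gm that by auto
  have gsm: "g y < g x" if "0 \<le> x" "x < y" "y \<le> 1" for x y using g_strict that by auto
  have g01: "0 \<le> g x" "g x \<le> 1 - x" if "0 \<le> x" "x \<le> 1" for x using grng that by auto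
  have apos: "astar > 0" using \<delta> by simp
  have gdel: "g \<delta> > astar" using gsm[of \<delta> astar] \<delta> astar by auto
  define s where "s = 1 - dhat"
  have d1: "dhat \<ge> \<delta> / astar" and d2: "dhat \<ge> 1 - g \<delta> + \<delta>" unfolding dhat_def by auto
  have dastar: "dhat * astar \<ge> \<delta>" using d1 apos by (simp add: field_simps)
  have dpos: "dhat > 0" using d1 \<delta> apos by (smt (verit) divide_pos_pos)
  have "\<delta> / astar < 1" using \<delta> apos by simp
  then have dlt1: "dhat < 1" unfolding dhat_def using gdel \<delta> by auto
  have s: "0 < s" "s < 1" using dpos dlt1 unfolding s_def by auto
  have ddel: "dhat \<ge> \<delta>" using d2 g01[of \<delta>] \<delta> astar by auto
  have h_eq: "h = (\<lambda>a. max (1 * g (min (1*a+\<delta>) 1) - \<delta>) 0)" using h_def by auto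
  have h_tr: "is_tradeoff h"
    unfolding is_tradeoff_def
  proof (intro conjI ballI impI)
    show "convex_on {0..1} h" unfolding h_eq by (rule comp_convex[OF g_tr]) (use \<delta> in auto)
    have "continuous_on {0..1} (\<lambda>a. g (min (a+\<delta>) 1))"
      by (rule continuous_on_compose2[OF gcont]) (auto intro!: continuous_intros simp: \<delta> less_imp_le)
    then show "continuous_on {0..1} h" unfolding h_eq
      by (intro continuous_on_max continuous_on_diff continuous_on_mult_left continuous_on_const) simp
    fix x y :: real assume "x \<in> {0..1}" "y \<in> {0..1}" "x \<le> y"
    then have "g (min (y + \<delta>) 1) \<le> g (min (x + \<delta>) 1)" using \<delta> by (intro gmono) auto
    then show "h y \<le> h x" unfolding h_def by auto
  next
    fix a :: real assume a: "a \<in> {0..1}"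
    show "0 \<le> h a" unfolding h_def by auto
    have "g (min (a + \<delta>) 1) \<le> 1 - min (a + \<delta>) 1" using g01[of "min (a + \<delta>) 1"] a \<delta> by auto
    then show "h a \<le> 1 - a" unfolding h_def using a \<delta> by auto
  qed
  have h_sym: "symmetric_tradeoff h" unfolding symmetric_tradeoff_def
  proof
    fix b :: real assume b: "b \<in> {0..1}"
    show "h b = tinv h b"
    proof (cases "g (min (b + \<delta>) 1) \<le> \<delta>")
      case True
      then have hb: "h b = 0" unfolding h_def by auto
      have "g \<delta> \<le> min (b + \<delta>) 1"
      proof (rule ccontr)
        assume "\<not> g \<delta> \<le> min (b + \<delta>) 1"
        then have "g (g \<delta>) < g (min (b + \<delta>) 1)"
          using gsm[of "min (b + \<delta>) 1" "g \<delta>"] b \<delta> g01[of \<delta>] astar by auto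
        then show False using True gf(3)[of \<delta>] \<delta> astar by auto
      qed
      moreover have "min \<delta> 1 = \<delta>" using \<delta> astar by auto
      ultimately have "h 0 \<le> b" unfolding h_def using b \<delta> by auto
      then have "tinv h b = 0" by (intro tinv_eq) (auto simp: h_def)
      then show ?thesis using hb by simp
    next
      case False
      then have m: "min (b + \<delta>) 1 = b + \<delta>" using gf(1) \<delta> by (auto simp: min_def split: if_splits)
      have hb: "h b = g (b + \<delta>) - \<delta>" using False m unfolding h_def by auto
      have bd: "b + \<delta> \<le> 1" using m by linarith
      have t0: "g (b + \<delta>) - \<delta> \<in> {0..1}"
      proof -
        have "g (b + \<delta>) \<le> 1 - (b + \<delta>)" using g01[of "b+\<delta>"] b \<delta> bd by auto
        then show ?thesis using False m b \<delta> by auto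
      qed
      have "tinv h b = g (b + \<delta>) - \<delta>"
      proof (rule tinv_eq[OF t0])
        have "min (g (b + \<delta>) - \<delta> + \<delta>) 1 = g (b + \<delta>)" using g01[of "b+\<delta>"] b \<delta> bd by auto
        then show "h (g (b + \<delta>) - \<delta>) \<le> b" unfolding h_def using gf(3)[of "b+\<delta>"] b \<delta> bd by auto
        fix t assume t: "t \<in> {0..1}" "h t \<le> b"
        show "g (b + \<delta>) - \<delta> \<le> t"
        proof (rule ccontr)
          assume "\<not> g (b + \<delta>) - \<delta> \<le> t"
          then have tl: "t + \<delta> < g (b + \<delta>)" by simp
          then have "g (g (b + \<delta>)) < g (t + \<delta>)"
            using gsm[of "t+\<delta>" "g (b+\<delta>)"] g01[of "b+\<delta>"] t \<delta> b bd by auto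
          then have "b < g (t + \<delta>) - \<delta>" using gf(3)[of "b+\<delta>"] b \<delta> bd by auto
          moreover have "min (t + \<delta>) 1 = t + \<delta>" using tl g01[of "b+\<delta>"] b \<delta> bd by auto
          ultimately show False using t unfolding h_def by auto
        qed
      qed
      then show ?thesis using hb by simp
    qed
  qed
  have k_eq: "k a = max (s * g (min ((1/s)*a+0) 1) - 0) 0" if a: "a \<in> {0..1}" for a
  proof (cases "a \<le> s")
    case True
    then have "a / s \<le> 1" using s by (simp add: divide_le_eq)
    then show ?thesis unfolding k_def s_def[symmetric] using True g01[of "a/s"] a s by auto
  next
    case False
    then have "1 \<le> a / s" using s by (simp add: le_divide_eq)
    then show ?thesis unfolding k_def s_def[symmetric] using False gf(1) by (auto simp: min_def)
  qed
  have k_le: "k a = s * g (a / s)" if "0 \<le> a" "a \<le> s" for a unfolding k_def s_def[symmetric] using that by auto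
  have k_tr: "is_tradeoff k"
    unfolding is_tradeoff_def
  proof (intro conjI ballI impI)
    show "convex_on {0..1} k"
      by (rule convex_on_eq01[OF comp_convex[OF g_tr, of "1/s" 0 s 0]]) (use s k_eq in auto)
    have "continuous_on {0..1} (\<lambda>a. g (min ((1/s)*a+0) 1))"
    proof (rule continuous_on_compose2[OF gcont])
      show "continuous_on {0..1} (\<lambda>a. min ((1/s)*a+0) 1)" by (intro continuous_intros)
      show "(\<lambda>a. min ((1/s)*a+0) 1) ` {0..1} \<subseteq> {0..1}" using s by auto
    qed
    then have "continuous_on {0..1} (\<lambda>a. max (s * g (min ((1/s)*a+0) 1) - 0) 0)"
      by (intro continuous_on_max continuous_on_diff continuous_on_mult_left continuous_on_const)
    moreover have "continuous_on {0..1} k = continuous_on {0..1} (\<lambda>a. max (s * g (min ((1/s)*a+0) 1) - 0) 0)"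
      by (rule continuous_on_cong[OF refl]) (rule k_eq)
    ultimately show "continuous_on {0..1} k" by (simp only:)
    fix x y :: real assume xy: "x \<in> {0..1}" "y \<in> {0..1}" "x \<le> y"
    then have "g (min ((1/s)*y+0) 1) \<le> g (min ((1/s)*x+0) 1)" using s
    proof (intro gmono)
      have "x / s \<le> y / s" using xy s by (simp add: divide_right_mono)
      then show "min ((1/s)*x+0) 1 \<le> min ((1/s)*y+0) 1" by auto
    qed (use xy s in auto)
    then have "s * g (min ((1/s)*y+0) 1) \<le> s * g (min ((1/s)*x+0) 1)" using s by (intro mult_left_mono) auto
    then show "k y \<le> k x" unfolding k_eq[OF xy(1)] k_eq[OF xy(2)] by (intro max.mono) auto
  next
    fix a :: real assume a: "a \<in> {0..1}"
    show "0 \<le> k a" unfolding k_eq[OF a] by auto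
    show "k a \<le> 1 - a"
    proof (cases "a \<le> s")
      case True
      then have "a / s \<le> 1" using s by (simp add: divide_le_eq)
      then have "s * g (a / s) \<le> s * (1 - a / s)" using g01[of "a/s"] a s by (intro mult_left_mono) auto
      also have "\<dots> = s - a" using s by (simp add: field_simps)
      finally show ?thesis using k_le[of a] True a s by auto
    next
      case False then show ?thesis using a unfolding k_def s_def[symmetric] by auto
    qed
  qed
  have k_sym: "symmetric_tradeoff k" unfolding symmetric_tradeoff_def
  proof
    fix b :: real assume b: "b \<in> {0..1}"
    show "k b = tinv k b"
    proof (cases "s \<le> b")
      case True
      have kb: "k b = 0" using True s b gf(1) unfolding k_def s_def[symmetric] by auto
      have "k 0 \<le> b" using k_le[of 0] s gf(2) True by auto
      then have "tinv k b = 0" by (intro tinv_eq) (auto simp: k_def)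
      then show ?thesis using kb by simp
    next
      case False
      have bs: "b / s \<in> {0..1}" using False b s by (auto simp: divide_le_eq)
      have kb: "k b = s * g (b / s)" using k_le[of b] False b by auto
      have gb: "g (b / s) \<in> {0..1}" using gf(4)[OF bs] .
      have t0: "s * g (b / s) \<in> {0..1}" using gb s by (auto simp: mult_le_one)
      have "tinv k b = s * g (b / s)"
      proof (rule tinv_eq[OF t0])
        have "k (s * g (b / s)) = s * g (g (b / s))" using k_le[of "s * g (b / s)"] gb s
          by (auto simp: mult_le_one)
        then show "k (s * g (b / s)) \<le> b" using gf(3)[OF bs] s by auto
        fix t assume t: "t \<in> {0..1}" "k t \<le> b"
        show "s * g (b / s) \<le> t"
        proof (rule ccontr)
          assume "\<not> s * g (b / s) \<le> t"
          then have tl: "t / s < g (b / s)" using s by (simp add: divide_less_eq mult.commute)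
          then have "g (g (b / s)) < g (t / s)"
            using gsm[of "t/s" "g (b/s)"] gb t s by auto
          then have "b < s * g (t / s)" using gf(3)[OF bs] s by (simp add: field_simps)
          moreover have "t \<le> s"
          proof -
            have "t / s < 1" using tl gb by auto
            then show ?thesis using s by (simp add: divide_less_eq)
          qed
          ultimately show False using t k_le[of t] by auto
        qed
      qed
      then show ?thesis using kb by simp
    qed
  qed
  have fh: "h a \<le> f a" if a: "a \<in> {0..1}" for a
  proof (rule reflect_up[OF f_tr f_sym h_tr h_sym _ _ _ a])
    show "astar - \<delta> \<in> {0..1}" using \<delta> astar by auto
    show "astar - \<delta> \<le> h (astar - \<delta>)" unfolding h_def using astar by auto
    show "\<forall>a\<in>{astar - \<delta>..1}. h a \<le> f a"
    proof
      fix a assume a: "a \<in> {astar - \<delta>..1}"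
      have f0: "0 \<le> f a" using f_tr a \<delta> astar unfolding is_tradeoff_def by auto
      show "h a \<le> f a"
      proof (cases "a \<le> 1 - \<delta>")
        case True then show ?thesis using hyp a f0 unfolding h_def by auto
      next
        case False then show ?thesis using f0 gf(1) \<delta> unfolding h_def by auto
      qed
    qed
  qed
  have hk0: "k a \<le> h a" if a: "a \<in> {0..s * astar}" for a
  proof -
    have sa: "s * astar \<le> s" using s astar by (simp add: mult_le_cancel_left1)
    have asa: "a + \<delta> \<le> astar"
    proof -
      have "s * astar + \<delta> \<le> astar" using dastar unfolding s_def by (simp add: algebra_simps)
      then show ?thesis using a by auto
    qed
    define x where "x = a + \<delta>"
    define G where "G = g x"
    have x: "0 < x" "x \<le> 1" "\<delta> \<le> x" using a \<delta> asa astar unfolding x_def by auto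
    have hG: "G - \<delta> \<le> h a" unfolding h_def G_def x_def using x x_def by auto
    have Gge: "astar \<le> G" using gmono[of x astar] x asa astar unfolding G_def x_def by auto
    have "a \<le> s" using a sa by auto
    then have as1: "a / s \<le> 1" using s by (auto simp: divide_le_eq)
    have "s * g (a / s) \<le> G - \<delta>"
    proof (cases "a * dhat \<le> s * \<delta>")
      case True
      define l where "l = a / (s * x)"
      have l: "0 \<le> l" "l \<le> 1"
      proof -
        show "0 \<le> l" using a s x unfolding l_def by auto
        have "a \<le> s * x" using True unfolding x_def s_def by (simp add: algebra_simps)
        then show "l \<le> 1" using s x unfolding l_def by (simp add: divide_le_eq)
      qed
      have "a / s = (1 - l) *\<^sub>R 0 + l *\<^sub>R x" unfolding l_def using s x by (simp add: field_simps)
      then have "g (a / s) \<le> (1 - l) * g 0 + l * g x"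
        using convex_onD[OF gc l, of 0 x] x by auto
      then have ga: "g (a / s) \<le> 1 - l + l * G" using gf(2) unfolding G_def by simp
      define u where "u = \<delta> / x"
      have u: "0 \<le> u" "u \<le> 1" using x \<delta> unfolding u_def by (auto simp: divide_le_eq)
      have "\<delta> = (1 - u) *\<^sub>R 0 + u *\<^sub>R x" unfolding u_def using x by simp
      then have "g \<delta> \<le> (1 - u) * g 0 + u * g x" using convex_onD[OF gc u, of 0 x] x by auto
      then have "g \<delta> \<le> 1 - \<delta> / x + \<delta> / x * G" using gf(2) unfolding G_def u_def by simp
      then have "x * g \<delta> \<le> x * (1 - \<delta> / x + \<delta> / x * G)" using x by (intro mult_left_mono) auto
      also have "\<dots> = x - \<delta> + \<delta> * G" using x by (simp add: field_simps)
      finally have "x * g \<delta> \<le> x - \<delta> + \<delta> * G" .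
      moreover have "x * (1 - dhat + \<delta>) \<le> x * g \<delta>" using d2 x by (intro mult_left_mono) auto
      ultimately have key: "\<delta> * G + (dhat - \<delta>) * x \<ge> \<delta>" by (simp add: algebra_simps)
      have "s * (1 - l + l * G) = s - a * (1 - G) / x" unfolding l_def using s x by (simp add: field_simps)
      also have "\<dots> \<le> G - \<delta>"
      proof -
        have "s * x - a * (1 - G) \<le> (G - \<delta>) * x"
          using key unfolding s_def x_def by (simp add: algebra_simps)
        then show ?thesis using x by (simp add: field_simps)
      qed
      finally show ?thesis using ga s by (smt (verit) mult_left_mono)
    next
      case False
      have "x \<le> a / s" using False s unfolding x_def s_def by (simp add: field_simps)
      then have "g (a / s) \<le> G" unfolding G_def using x as1 by (intro gmono) auto
      then have "s * g (a / s) \<le> s * G" using s by (intro mult_left_mono) auto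
      also have "\<dots> \<le> G - \<delta>"
      proof -
        have "dhat * astar \<le> dhat * G" using Gge dpos by (intro mult_left_mono) auto
        then show ?thesis using dastar unfolding s_def by (simp add: algebra_simps)
      qed
      finally show ?thesis .
    qed
    then show ?thesis using k_le[of a] a sa hG by auto
  qed
  have hk: "k a \<le> h a" if a: "a \<in> {0..1}" for a
  proof (rule reflect_down[OF h_tr h_sym k_tr k_sym _ _ _ a])
    show "s * astar \<in> {0..1}" using s astar by (auto simp: mult_le_one)
    have "s * astar \<le> s" using s astar by (simp add: mult_le_cancel_left1)
    then show "k (s * astar) \<le> s * astar" using k_le[of "s*astar"] s astar by auto
    show "\<forall>a\<in>{0..s * astar}. k a \<le> h a" using hk0 by blast
  qed
  show ?thesis using h_tr h_sym k_tr k_sym fh hk by blast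
qed




lemma unif_density: "unif c = density lborel (\<lambda>x. ennreal (indicator {c..c+1} x))"
  unfolding unif_def uniform_measure_def by (simp add: ennreal_indicator divide_ennreal_def)

lemma prob_unif: "prob_space (unif c)"
  unfolding unif_def by (rule prob_space_uniform_measure) auto

lemma sets_unif[simp, measurable_cong]: "sets (unif c) = sets borel"
  and space_unif[simp]: "space (unif c) = UNIV"
  unfolding unif_def by auto

lemma int_unif:
  fixes f :: "real \<Rightarrow> real"
  assumes "f \<in> borel_measurable borel"
  shows "integral\<^sup>L (unif c) f = (\<integral>x. indicator {c..c+1} x * f x \<partial>lborel)"
proof -
  have "integral\<^sup>L (density lborel (\<lambda>x. ennreal (indicator {c..c+1} x))) f = (\<integral>x. indicator {c..c+1} x *\<^sub>R f x \<partial>lborel)"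
    using Bochner_Integration.integral_density[of f lborel "indicator {c..c+1}"] assms by simp
  then show ?thesis unfolding unif_density by simp
qed

lemma int_box:
  fixes f :: "real \<Rightarrow> real"
  assumes "f \<in> borel_measurable borel" "\<And>y. \<bar>f y\<bar> \<le> 1"
  shows "integrable lborel (\<lambda>y. indicator {a..b} y * f y)"
proof (rule Bochner_Integration.integrable_bound[where M=lborel and f="indicator {a..b} :: real \<Rightarrow> real"])
  show "integrable lborel (indicator {a..b} :: real \<Rightarrow> real)"
    by (rule integrable_real_indicator) (auto simp: emeasure_lborel_Icc_eq)
  show "(\<lambda>y. indicator {a..b} y * f y) \<in> borel_measurable lborel" using assms by auto
  show "AE x in lborel. norm (indicator {a..b} x * f x) \<le> norm (indicator {a..b} x :: real)"
    using assms(2) by (auto simp: indicator_def abs_mult)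
qed

lemma int_indicator_Icc: "a \<le> b \<Longrightarrow> (\<integral>x. indicator {a..b} x \<partial>lborel) = b - (a::real)"
  by simp

lemma measure_unif:
  assumes "S \<in> sets borel"
  shows "measure (unif c) S = measure lborel ({c..c+1} \<inter> S)"
  unfolding unif_def using assms by (subst measure_uniform_measure) auto

lemma int_01:
  fixes \<phi> :: "'a \<Rightarrow> real"
  assumes Q: "prob_space Q" and m: "\<phi> \<in> borel_measurable Q" and b: "\<forall>x\<in>space Q. 0 \<le> \<phi> x \<and> \<phi> x \<le> 1"
  shows "integrable Q \<phi>" "0 \<le> (\<integral>x. \<phi> x \<partial>Q)" "(\<integral>x. \<phi> x \<partial>Q) \<le> 1"
proof -
  interpret Q: prob_space Q by fact
  have "AE x in Q. norm (\<phi> x) \<le> 1"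
  proof (rule AE_I2)
    fix x assume "x \<in> space Q" then show "norm (\<phi> x) \<le> 1" using b by auto
  qed
  then show i: "integrable Q \<phi>" by (rule Q.integrable_const_bound[OF _ m])
  show "0 \<le> (\<integral>x. \<phi> x \<partial>Q)" using b by (intro Bochner_Integration.integral_nonneg) auto
  have "(\<integral>x. \<phi> x \<partial>Q) \<le> (\<integral>x. 1 \<partial>Q)" using b i by (intro Bochner_Integration.integral_mono) auto
  then show "(\<integral>x. \<phi> x \<partial>Q) \<le> 1" by (simp add: Q.prob_space)
qed

lemma tradeoff_le:
  fixes \<psi> :: "'a \<Rightarrow> real"
  assumes Q: "prob_space Q" and sQ: "sets Q = sets P" and m: "\<psi> \<in> borel_measurable P"
    and b: "\<forall>x\<in>space P. 0 \<le> \<psi> x \<and> \<psi> x \<le> 1" and le: "(\<integral>x. \<psi> x \<partial>P) \<le> a"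
  shows "tradeoff P Q a \<le> 1 - (\<integral>x. \<psi> x \<partial>Q)"
  unfolding tradeoff_def
proof (rule cInf_lower)
  show "1 - (\<integral>x. \<psi> x \<partial>Q) \<in> {1 - (\<integral>x. \<phi> x \<partial>Q) |\<phi>. \<phi> \<in> borel_measurable P \<and> (\<forall>x\<in>space P. 0 \<le> \<phi> x \<and> \<phi> x \<le> 1) \<and> (\<integral>x. \<phi> x \<partial>P) \<le> a}"
    using m b le by blast
  have sp: "space Q = space P" using sQ by (rule sets_eq_imp_space_eq)
  show "bdd_below {1 - (\<integral>x. \<phi> x \<partial>Q) |\<phi>. \<phi> \<in> borel_measurable P \<and> (\<forall>x\<in>space P. 0 \<le> \<phi> x \<and> \<phi> x \<le> 1) \<and> (\<integral>x. \<phi> x \<partial>P) \<le> a}"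
  proof (rule bdd_belowI[where m=0], clarify)
    fix \<phi> :: "_ \<Rightarrow> real" assume "\<phi> \<in> borel_measurable P" "\<forall>x\<in>space P. 0 \<le> \<phi> x \<and> \<phi> x \<le> 1"
    then have "\<phi> \<in> borel_measurable Q" "\<forall>x\<in>space Q. 0 \<le> \<phi> x \<and> \<phi> x \<le> 1"
      using measurable_cong_sets[OF sQ refl] sp by auto
    then show "0 \<le> 1 - (\<integral>x. \<phi> x \<partial>Q)" using int_01[OF Q] by fastforce
  qed
qed

lemma tradeoff_ge:
  assumes a: "0 \<le> a"
    and H: "\<And>\<phi>. \<phi> \<in> borel_measurable P \<Longrightarrow> \<forall>x\<in>space P. 0 \<le> \<phi> x \<and> \<phi> x \<le> 1 \<Longrightarrow> (\<integral>x. \<phi> x \<partial>P) \<le> a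
      \<Longrightarrow> c \<le> 1 - (\<integral>x. \<phi> x \<partial>Q)"
  shows "c \<le> tradeoff P Q a"
  unfolding tradeoff_def
proof (rule cInf_greatest)
  have "(1::real) - (\<integral>x. 0 \<partial>Q) \<in> {1 - (\<integral>x. \<phi> x \<partial>Q) |\<phi>. \<phi> \<in> borel_measurable P \<and> (\<forall>x\<in>space P. 0 \<le> \<phi> x \<and> \<phi> x \<le> 1) \<and> (\<integral>x. \<phi> x \<partial>P) \<le> a}"
    using a by (intro CollectI exI[where x="\<lambda>x. 0"]) auto
  then show "{1 - (\<integral>x. \<phi> x \<partial>Q) |\<phi>. \<phi> \<in> borel_measurable P \<and> (\<forall>x\<in>space P. 0 \<le> \<phi> x \<and> \<phi> x \<le> 1) \<and> (\<integral>x. \<phi> x \<partial>P) \<le> a} \<noteq> {}"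
    by blast
  fix y assume "y \<in> {1 - (\<integral>x. \<phi> x \<partial>Q) |\<phi>. \<phi> \<in> borel_measurable P \<and> (\<forall>x\<in>space P. 0 \<le> \<phi> x \<and> \<phi> x \<le> 1) \<and> (\<integral>x. \<phi> x \<partial>P) \<le> a}"
  then show "c \<le> y" using H by blast
qed

lemma unif_tradeoff:
  fixes d a :: real
  assumes d: "0 \<le> d" "d \<le> 1" and a: "0 \<le> a" "a \<le> 1"
  shows "tradeoff (unif 0) (unif d) a = max (1 - a - d) 0"
proof (rule antisym)
  let ?\<phi> = "indicator {1-a..} :: real \<Rightarrow> real"
  have i0: "(\<integral>x. ?\<phi> x \<partial>unif 0) = a"
  proof -
    have "{0..0+1} \<inter> {1-a..} = {1-a..1::real}" using a by auto
    then show ?thesis using a by (simp add: measure_unif)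
  qed
  have "{d..d+1} \<inter> {1-a..} = {max d (1-a)..d+1::real}" by auto
  then have i1: "(\<integral>x. ?\<phi> x \<partial>unif d) = d + 1 - max d (1-a)" using a d by (simp add: measure_unif)
  have "tradeoff (unif 0) (unif d) a \<le> 1 - (\<integral>x. ?\<phi> x \<partial>unif d)"
    by (rule tradeoff_le[OF prob_unif]) (use i0 in \<open>auto simp: indicator_def\<close>)
  also have "\<dots> = max (1 - a - d) 0" using i1 by auto
  finally show "tradeoff (unif 0) (unif d) a \<le> max (1 - a - d) 0" .
  show "max (1 - a - d) 0 \<le> tradeoff (unif 0) (unif d) a"
  proof (rule tradeoff_ge[OF a(1)])
    fix \<phi> :: "real \<Rightarrow> real"
    assume m: "\<phi> \<in> borel_measurable (unif 0)" and b: "\<forall>x\<in>space (unif 0). 0 \<le> \<phi> x \<and> \<phi> x \<le> 1"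
      and le: "(\<integral>x. \<phi> x \<partial>unif 0) \<le> a"
    have mb: "\<phi> \<in> borel_measurable borel" using m measurable_cong_sets[OF sets_unif refl] by blast
    have b': "\<And>y. \<bar>\<phi> y\<bar> \<le> 1" using b by auto
    have le1: "(\<integral>x. \<phi> x \<partial>unif d) \<le> 1"
      using int_01[OF prob_unif, of \<phi> d] mb b measurable_cong_sets[OF sets_unif refl] by auto
    have "(\<integral>x. \<phi> x \<partial>unif d) = (\<integral>x. indicator {d..d+1} x * \<phi> x \<partial>lborel)" using mb by (rule int_unif)
    also have "\<dots> \<le> (\<integral>x. indicator {0..0+1} x * \<phi> x + indicator {1..1+d} x \<partial>lborel)"
    proof (rule Bochner_Integration.integral_mono)
      show "integrable lborel (\<lambda>x. indicator {d..d+1} x * \<phi> x)" by (rule int_box[OF mb b'])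
      show "integrable lborel (\<lambda>x. indicator {0..0+1} x * \<phi> x + indicator {1..1+d} x)"
        by (intro Bochner_Integration.integrable_add int_box[OF mb b'] integrable_real_indicator)
          (auto simp: emeasure_lborel_Icc_eq)
      fix x :: real
      show "indicator {d..d+1} x * \<phi> x \<le> indicator {0..0+1} x * \<phi> x + indicator {1..1+d} x"
        using b d by (auto simp: indicator_def)
    qed
    also have "\<dots> = (\<integral>x. \<phi> x \<partial>unif 0) + d"
      using int_unif[OF mb, of 0] d
      by (subst Bochner_Integration.integral_add) (auto intro!: int_box[OF mb b'] integrable_real_indicator simp: emeasure_lborel_Icc_eq)
    finally show "max (1 - a - d) 0 \<le> 1 - (\<integral>x. \<phi> x \<partial>unif d)" using le le1 by auto
  qed
qed

lemma prod_int:
  fixes \<psi> :: "'a \<Rightarrow> real" and w :: "real \<Rightarrow> real"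
  assumes P: "prob_space P" and m: "\<psi> \<in> borel_measurable P" and b: "\<forall>x\<in>space P. \<bar>\<psi> x\<bar> \<le> 1"
    and mc: "w \<in> borel_measurable borel" and bc: "\<forall>y. \<bar>w y\<bar> \<le> 1"
  shows "integrable (P \<Otimes>\<^sub>M unif c) (\<lambda>z. \<psi> (fst z) * w (snd z))"
    "(\<integral>z. \<psi> (fst z) * w (snd z) \<partial>(P \<Otimes>\<^sub>M unif c)) = (\<integral>x. \<psi> x \<partial>P) * (\<integral>y. w y \<partial>unif c)"
proof -
  interpret P: prob_space P by fact
  interpret U: prob_space "unif c" by (rule prob_unif)
  interpret PU: pair_prob_space P "unif c" by unfold_locales
  have mz: "(\<lambda>z. \<psi> (fst z) * w (snd z)) \<in> borel_measurable (P \<Otimes>\<^sub>M unif c)"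
    using m mc by measurable
  have "AE z in P \<Otimes>\<^sub>M unif c. norm (\<psi> (fst z) * w (snd z)) \<le> 1"
  proof (rule AE_I2)
    fix z assume "z \<in> space (P \<Otimes>\<^sub>M unif c)"
    then have "fst z \<in> space P" by (auto simp: space_pair_measure)
    then have "\<bar>\<psi> (fst z)\<bar> \<le> 1" "\<bar>w (snd z)\<bar> \<le> 1" using b bc by auto
    then show "norm (\<psi> (fst z) * w (snd z)) \<le> 1" by (simp add: abs_mult mult_le_one)
  qed
  then show i: "integrable (P \<Otimes>\<^sub>M unif c) (\<lambda>z. \<psi> (fst z) * w (snd z))"
    by (rule PU.integrable_const_bound[OF _ mz])
  have "(\<integral>z. \<psi> (fst z) * w (snd z) \<partial>(P \<Otimes>\<^sub>M unif c)) = (\<integral>x. (\<integral>y. \<psi> x * w y \<partial>unif c) \<partial>P)"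
    using PU.integral_fst'[OF i] by simp
  also have "\<dots> = (\<integral>x. \<psi> x * (\<integral>y. w y \<partial>unif c) \<partial>P)" by simp
  also have "\<dots> = (\<integral>x. \<psi> x \<partial>P) * (\<integral>y. w y \<partial>unif c)" by simp
  finally show "(\<integral>z. \<psi> (fst z) * w (snd z) \<partial>(P \<Otimes>\<^sub>M unif c)) = (\<integral>x. \<psi> x \<partial>P) * (\<integral>y. w y \<partial>unif c)" .
qed

lemma prod_tradeoff:
  fixes P Q :: "'a measure" and g k :: "real \<Rightarrow> real" and d a :: real
  assumes P: "prob_space P" and Q: "prob_space Q" and sPQ: "sets P = sets Q"
    and T: "\<forall>a\<in>{0..1}. tradeoff P Q a = g a"
    and d: "0 < d" "d < 1"
    and k_def: "\<And>a. k a = (if a \<le> 1 - d then (1 - d) * g (a / (1 - d)) else 0)"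
    and a: "0 \<le> a" "a \<le> 1"
  shows "tradeoff (P \<Otimes>\<^sub>M unif 0) (Q \<Otimes>\<^sub>M unif d) a = k a"
proof -
  interpret P: prob_space P by fact
  interpret Q: prob_space Q by fact
  interpret U0: prob_space "unif 0" by (rule prob_unif)
  interpret Ud: prob_space "unif d" by (rule prob_unif)
  interpret PU: pair_prob_space P "unif 0" by unfold_locales
  interpret QU: pair_prob_space Q "unif d" by unfold_locales
  define s where "s = 1 - d"
  have s: "0 < s" "s < 1" using d unfolding s_def by auto
  have sM: "sets (Q \<Otimes>\<^sub>M unif d) = sets (P \<Otimes>\<^sub>M unif 0)"
    using sPQ by (intro sets_pair_measure_cong) auto
  have sL: "sets (P \<Otimes>\<^sub>M lborel) = sets (P \<Otimes>\<^sub>M unif 0)"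
    by (intro sets_pair_measure_cong) auto
  have spQ: "space Q = space P" using sPQ by (metis sets_eq_imp_space_eq)
  have spM0: "space (P \<Otimes>\<^sub>M unif 0) = space P \<times> UNIV" by (simp add: space_pair_measure)
  have spM1: "space (Q \<Otimes>\<^sub>M unif d) = space P \<times> UNIV" by (simp add: space_pair_measure spQ)
  have prob0: "prob_space (P \<Otimes>\<^sub>M unif 0)" by (rule prob_space_pair[OF P prob_unif])
  have prob1: "prob_space (Q \<Otimes>\<^sub>M unif d)" by (rule prob_space_pair[OF Q prob_unif])
  have mu0: "measure (unif 0) S = measure lborel ({0..1::real} \<inter> S)" if "S \<in> sets borel" for S
    using measure_unif[OF that, of 0] by simp
  have mud: "measure (unif d) S = measure lborel ({d..d+1::real} \<inter> S)" if "S \<in> sets borel" for S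
    using measure_unif[OF that, of d] by simp
  show ?thesis
  proof (rule antisym)
    show "tradeoff (P \<Otimes>\<^sub>M unif 0) (Q \<Otimes>\<^sub>M unif d) a \<le> k a"
    proof (cases "a \<le> s")
      case False
      then have ka: "k a = 0" unfolding k_def s_def by auto
      let ?w = "indicator {d..} :: real \<Rightarrow> real"
      note pi0 = prod_int[OF P, of "\<lambda>x. 1" ?w 0]
      note pi1 = prod_int[OF Q, of "\<lambda>x. 1" ?w d]
      have "{0..1} \<inter> {d..} = {d..1::real}" using d by auto
      then have e0: "(\<integral>z. 1 * ?w (snd z) \<partial>(P \<Otimes>\<^sub>M unif 0)) = s"
        using pi0(2) d by (simp add: mu0 s_def max_def P.prob_space)
      have "{d..d+1} \<inter> {d..} = {d..d+1::real}" by auto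
      then have e1: "(\<integral>z. 1 * ?w (snd z) \<partial>(Q \<Otimes>\<^sub>M unif d)) = 1"
        using pi1(2) d by (simp add: mud Q.prob_space)
      have "tradeoff (P \<Otimes>\<^sub>M unif 0) (Q \<Otimes>\<^sub>M unif d) a \<le> 1 - (\<integral>z. 1 * ?w (snd z) \<partial>(Q \<Otimes>\<^sub>M unif d))"
      proof (rule tradeoff_le[OF prob1 sM])
        show "(\<lambda>z. 1 * ?w (snd z)) \<in> borel_measurable (P \<Otimes>\<^sub>M unif 0)" by measurable
        show "\<forall>x\<in>space (P \<Otimes>\<^sub>M unif 0). 0 \<le> 1 * ?w (snd x) \<and> 1 * ?w (snd x) \<le> 1"
          by (auto simp: indicator_def)
        show "(\<integral>z. 1 * ?w (snd z) \<partial>(P \<Otimes>\<^sub>M unif 0)) \<le> a" using e0 False by simp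
      qed
      then show ?thesis using e1 ka by simp
    next
      case True
      have ka: "k a = s * g (a / s)" unfolding k_def s_def using True s_def by auto
      have as: "0 \<le> a / s" "a / s \<le> 1" using True a s by (auto simp: divide_le_eq)
      show ?thesis
      proof (rule field_le_epsilon)
        fix e :: real assume e: "0 < e"
        let ?S = "{1 - (\<integral>x. \<phi> x \<partial>Q) |\<phi>. \<phi> \<in> borel_measurable P \<and> (\<forall>x\<in>space P. 0 \<le> \<phi> x \<and> \<phi> x \<le> 1) \<and> (\<integral>x. \<phi> x \<partial>P) \<le> a / s}"
        have ne: "?S \<noteq> {}"
        proof -
          have "(1::real) - (\<integral>x. 0 \<partial>Q) \<in> ?S"
            using as by (intro CollectI exI[where x="\<lambda>x. 0"]) auto
          then show ?thesis by blast
        qed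
        have "Inf ?S = g (a / s)" using T as unfolding tradeoff_def by auto
        then have "Inf ?S < g (a / s) + e / s" using e s by simp
        then obtain y where "y \<in> ?S" "y < g (a / s) + e / s" using cInf_lessD[OF ne] by blast
        then obtain \<psi> where \<psi>m[measurable]: "\<psi> \<in> borel_measurable P"
          and \<psi>b: "\<forall>x\<in>space P. 0 \<le> \<psi> x \<and> \<psi> x \<le> 1" and \<psi>P: "(\<integral>x. \<psi> x \<partial>P) \<le> a / s"
          and \<psi>Q: "1 - (\<integral>x. \<psi> x \<partial>Q) < g (a / s) + e / s" by blast
        have \<psi>mQ: "\<psi> \<in> borel_measurable Q" using \<psi>m measurable_cong_sets[OF sPQ refl] by blast
        have \<psi>bQ: "\<forall>x\<in>space Q. \<bar>\<psi> x\<bar> \<le> 1" using \<psi>b spQ by auto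
        have \<psi>bP: "\<forall>x\<in>space P. \<bar>\<psi> x\<bar> \<le> 1" using \<psi>b by auto
        let ?w1 = "indicator {d..1} :: real \<Rightarrow> real"
        let ?w2 = "indicator {1<..} :: real \<Rightarrow> real"
        define \<phi> where "\<phi> z = \<psi> (fst z) * ?w1 (snd z) + 1 * ?w2 (snd z)" for z
        note a0 = prod_int[OF P \<psi>m \<psi>bP, of ?w1 0] and b0 = prod_int[OF P, of "\<lambda>x. 1" ?w2 0]
        note a1 = prod_int[OF Q \<psi>mQ \<psi>bQ, of ?w1 d] and b1 = prod_int[OF Q, of "\<lambda>x. 1" ?w2 d]
        have m01: "measure lborel ({0..1::real} \<inter> {d..1}) = s" "measure lborel ({0..1::real} \<inter> {1<..}) = 0"
          "measure lborel ({d..d+1::real} \<inter> {d..1}) = s" "measure lborel ({d..d+1::real} \<inter> {1<..}) = d"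
        proof -
          have e1: "{0..1} \<inter> {d..1} = {d..1::real}" "{0..1} \<inter> {1<..} = ({}::real set)"
            "{d..d+1} \<inter> {d..1} = {d..1::real}" "{d..d+1} \<inter> {1<..} = {1<..d+1::real}" using d by auto
          show "measure lborel ({0..1::real} \<inter> {d..1}) = s" unfolding e1(1) using d by (simp add: s_def)
          show "measure lborel ({0..1::real} \<inter> {1<..}) = 0" using e1(2) measure_empty[of lborel] by metis
          show "measure lborel ({d..d+1::real} \<inter> {d..1}) = s" unfolding e1(3) using d by (simp add: s_def)
          show "measure lborel ({d..d+1::real} \<inter> {1<..}) = d" unfolding e1(4) using d by simp
        qed
        have I0: "(\<integral>z. \<phi> z \<partial>(P \<Otimes>\<^sub>M unif 0)) = (\<integral>x. \<psi> x \<partial>P) * s"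
          unfolding \<phi>_def using a0 b0 m01 by (simp add: mu0 P.prob_space)
        have I1: "(\<integral>z. \<phi> z \<partial>(Q \<Otimes>\<^sub>M unif d)) = (\<integral>x. \<psi> x \<partial>Q) * s + d"
          unfolding \<phi>_def using a1 b1 m01 by (simp add: mud Q.prob_space)
        have "tradeoff (P \<Otimes>\<^sub>M unif 0) (Q \<Otimes>\<^sub>M unif d) a \<le> 1 - (\<integral>z. \<phi> z \<partial>(Q \<Otimes>\<^sub>M unif d))"
        proof (rule tradeoff_le[OF prob1 sM])
          show "\<phi> \<in> borel_measurable (P \<Otimes>\<^sub>M unif 0)" unfolding \<phi>_def by measurable
          show "\<forall>x\<in>space (P \<Otimes>\<^sub>M unif 0). 0 \<le> \<phi> x \<and> \<phi> x \<le> 1"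
            using \<psi>b by (auto simp: \<phi>_def indicator_def spM0)
          have "(\<integral>x. \<psi> x \<partial>P) * s \<le> a / s * s" using \<psi>P s by (intro mult_right_mono) auto
          then show "(\<integral>z. \<phi> z \<partial>(P \<Otimes>\<^sub>M unif 0)) \<le> a" using I0 s by simp
        qed
        also have "\<dots> = s * (1 - (\<integral>x. \<psi> x \<partial>Q))" using I1 unfolding s_def by (simp add: algebra_simps)
        also have "\<dots> \<le> s * (g (a / s) + e / s)" using \<psi>Q s by (intro mult_left_mono) auto
        also have "\<dots> = k a + e" using ka s by (simp add: algebra_simps)
        finally show "tradeoff (P \<Otimes>\<^sub>M unif 0) (Q \<Otimes>\<^sub>M unif d) a \<le> k a + e" .
      qed
    qed
  next
    show "k a \<le> tradeoff (P \<Otimes>\<^sub>M unif 0) (Q \<Otimes>\<^sub>M unif d) a"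
    proof (rule tradeoff_ge[OF a(1)])
      fix \<phi> :: "'a \<times> real \<Rightarrow> real"
      assume m: "\<phi> \<in> borel_measurable (P \<Otimes>\<^sub>M unif 0)" and b: "\<forall>x\<in>space (P \<Otimes>\<^sub>M unif 0). 0 \<le> \<phi> x \<and> \<phi> x \<le> 1"
        and le: "(\<integral>x. \<phi> x \<partial>(P \<Otimes>\<^sub>M unif 0)) \<le> a"
      have mL[measurable]: "\<phi> \<in> borel_measurable (P \<Otimes>\<^sub>M lborel)" using m measurable_cong_sets[OF sL refl] by blast
      have m1: "\<phi> \<in> borel_measurable (Q \<Otimes>\<^sub>M unif d)" using m measurable_cong_sets[OF sM refl] by blast
      have b1: "\<forall>x\<in>space (Q \<Otimes>\<^sub>M unif d). 0 \<le> \<phi> x \<and> \<phi> x \<le> 1" using b spM0 spM1 by auto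
      have int0: "integrable (P \<Otimes>\<^sub>M unif 0) \<phi>" by (rule int_01(1)[OF prob0 m b])
      have int1: "integrable (Q \<Otimes>\<^sub>M unif d) \<phi>" by (rule int_01(1)[OF prob1 m1 b1])
      have M1le: "(\<integral>x. \<phi> x \<partial>(Q \<Otimes>\<^sub>M unif d)) \<le> 1" by (rule int_01(3)[OF prob1 m1 b1])
      define J where "J x = (\<integral>y. indicator {d..1} y * \<phi> (x, y) \<partial>lborel)" for x
      have Jm[measurable]: "J \<in> borel_measurable P" unfolding J_def by measurable
      have JmQ: "J \<in> borel_measurable Q" using Jm measurable_cong_sets[OF sPQ refl] by blast
      have px: "(\<lambda>y. \<phi> (x, y)) \<in> borel_measurable borel" "\<And>y. \<bar>\<phi> (x, y)\<bar> \<le> 1"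
        "\<And>y. 0 \<le> \<phi> (x, y)" if x: "x \<in> space P" for x
      proof -
        show "(\<lambda>y. \<phi> (x, y)) \<in> borel_measurable borel" using measurable_Pair2[OF mL x] by simp
        show "\<bar>\<phi> (x, y)\<bar> \<le> 1" for y using b x spM0 by auto
        show "0 \<le> \<phi> (x, y)" for y using b x spM0 by auto
      qed
      have Jb: "0 \<le> J x \<and> J x \<le> s" if x: "x \<in> space P" for x
      proof
        show "0 \<le> J x" unfolding J_def using px(3)[OF x]
          by (intro Bochner_Integration.integral_nonneg) (auto simp: indicator_def)
        have "J x \<le> (\<integral>y. indicator {d..1} y \<partial>lborel)" unfolding J_def
        proof (rule Bochner_Integration.integral_mono)
          show "integrable lborel (\<lambda>y. indicator {d..1} y * \<phi> (x, y))" by (rule int_box[OF px(1,2)[OF x]])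
          show "integrable lborel (indicator {d..1} :: real \<Rightarrow> real)"
            by (rule integrable_real_indicator) (auto simp: emeasure_lborel_Icc_eq)
          fix y :: real show "indicator {d..1} y * \<phi> (x, y) \<le> indicator {d..1} y"
            using px(2)[OF x, of y] by (auto simp: indicator_def)
        qed
        then show "J x \<le> s" using d by (simp add: s_def)
      qed
      have in0: "J x \<le> (\<integral>y. \<phi> (x, y) \<partial>unif 0)" if x: "x \<in> space P" for x
      proof -
        have "J x \<le> (\<integral>y. indicator {0..0+1} y * \<phi> (x, y) \<partial>lborel)" unfolding J_def
        proof (rule Bochner_Integration.integral_mono)
          show "integrable lborel (\<lambda>y. indicator {d..1} y * \<phi> (x, y))" by (rule int_box[OF px(1,2)[OF x]])
          show "integrable lborel (\<lambda>y. indicator {0..0+1} y * \<phi> (x, y))" by (rule int_box[OF px(1,2)[OF x]])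
          fix y :: real show "indicator {d..1} y * \<phi> (x, y) \<le> indicator {0..0+1} y * \<phi> (x, y)"
            using px(3)[OF x, of y] d by (auto simp: indicator_def)
        qed
        then show ?thesis using int_unif[OF px(1)[OF x], of 0] by simp
      qed
      have in1: "(\<integral>y. \<phi> (x, y) \<partial>unif d) \<le> J x + d" if x: "x \<in> space P" for x
      proof -
        have "(\<integral>y. \<phi> (x, y) \<partial>unif d) = (\<integral>y. indicator {d..d+1} y * \<phi> (x, y) \<partial>lborel)"
          by (rule int_unif[OF px(1)[OF x]])
        also have "\<dots> \<le> (\<integral>y. indicator {d..1} y * \<phi> (x, y) + indicator {1..1+d} y \<partial>lborel)"
        proof (rule Bochner_Integration.integral_mono)
          show "integrable lborel (\<lambda>y. indicator {d..d+1} y * \<phi> (x, y))" by (rule int_box[OF px(1,2)[OF x]])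
          show "integrable lborel (\<lambda>y. indicator {d..1} y * \<phi> (x, y) + indicator {1..1+d} y)"
            by (intro Bochner_Integration.integrable_add int_box[OF px(1,2)[OF x]] integrable_real_indicator)
              (auto simp: emeasure_lborel_Icc_eq)
          fix y :: real show "indicator {d..d+1} y * \<phi> (x, y) \<le> indicator {d..1} y * \<phi> (x, y) + indicator {1..1+d} y"
            using px(2,3)[OF x, of y] d by (auto simp: indicator_def)
        qed
        also have "\<dots> = J x + d" unfolding J_def using d
          by (subst Bochner_Integration.integral_add) (auto intro!: int_box[OF px(1,2)[OF x]] integrable_real_indicator simp: emeasure_lborel_Icc_eq)
        finally show ?thesis .
      qed
      have JiP: "integrable P J"
      proof -
        have "AE x in P. norm (J x) \<le> 1"
        proof (rule AE_I2)
          fix x assume "x \<in> space P" then show "norm (J x) \<le> 1" using Jb s by fastforce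
        qed
        then show ?thesis by (rule P.integrable_const_bound[OF _ Jm])
      qed
      have JiQ: "integrable Q J"
      proof -
        have "AE x in Q. norm (J x) \<le> 1"
        proof (rule AE_I2)
          fix x assume "x \<in> space Q" then show "norm (J x) \<le> 1" using Jb s spQ by fastforce
        qed
        then show ?thesis by (rule Q.integrable_const_bound[OF _ JmQ])
      qed
      have "(\<integral>x. J x \<partial>P) \<le> (\<integral>x. (\<integral>y. \<phi> (x, y) \<partial>unif 0) \<partial>P)"
        by (rule Bochner_Integration.integral_mono[OF JiP PU.integrable_fst'[OF int0] in0])
      also have "\<dots> = (\<integral>x. \<phi> x \<partial>(P \<Otimes>\<^sub>M unif 0))" by (rule PU.integral_fst'[OF int0])
      finally have JP: "(\<integral>x. J x \<partial>P) \<le> a" using le by simp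
      have "(\<integral>x. \<phi> x \<partial>(Q \<Otimes>\<^sub>M unif d)) = (\<integral>x. (\<integral>y. \<phi> (x, y) \<partial>unif d) \<partial>Q)"
        by (rule QU.integral_fst'[OF int1, symmetric])
      also have "\<dots> \<le> (\<integral>x. J x + d \<partial>Q)"
        by (rule Bochner_Integration.integral_mono[OF QU.integrable_fst'[OF int1]]) (use JiQ in1 spQ in auto)
      also have "\<dots> = (\<integral>x. J x \<partial>Q) + d" using JiQ by (simp add: Q.prob_space)
      finally have JQ: "(\<integral>x. \<phi> x \<partial>(Q \<Otimes>\<^sub>M unif d)) \<le> (\<integral>x. J x \<partial>Q) + d" .
      show "k a \<le> 1 - (\<integral>x. \<phi> x \<partial>(Q \<Otimes>\<^sub>M unif d))"
      proof (cases "a \<le> s")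
        case False
        then show ?thesis using M1le unfolding k_def s_def by auto
      next
        case True
        have ka: "k a = s * g (a / s)" unfolding k_def s_def using True s_def by auto
        have as: "0 \<le> a / s" "a / s \<le> 1" using True a s by (auto simp: divide_le_eq)
        have "tradeoff P Q (a / s) \<le> 1 - (\<integral>x. J x / s \<partial>Q)"
        proof (rule tradeoff_le[OF Q sPQ[symmetric]])
          show "(\<lambda>x. J x / s) \<in> borel_measurable P" by measurable
          show "\<forall>x\<in>space P. 0 \<le> J x / s \<and> J x / s \<le> 1" using Jb s by auto
          show "(\<integral>x. J x / s \<partial>P) \<le> a / s" using JP s by (simp add: divide_right_mono)
        qed
        then have "g (a / s) \<le> 1 - (\<integral>x. J x \<partial>Q) / s" using T as by simp
        then have "s * g (a / s) \<le> s * (1 - (\<integral>x. J x \<partial>Q) / s)" using s by (intro mult_left_mono) auto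
        also have "\<dots> = s - (\<integral>x. J x \<partial>Q)" using s by (simp add: field_simps)
        finally show ?thesis using ka JQ unfolding s_def by simp
      qed
    qed
  qed
qed


theorem mainTheorem13:
  fixes f g h k :: "real \<Rightarrow> real" and \<delta> astar dhat :: real
  assumes f_tr: "is_tradeoff f" and f_sym: "symmetric_tradeoff f"
    and g_tr: "is_tradeoff g" and g_sym: "symmetric_tradeoff g"
    and g_strict: "\<forall>x\<in>{0..1}. \<forall>y\<in>{0..1}. x < y \<longrightarrow> g y < g x"
    and astar: "0 \<le> astar" "astar \<le> 1" "g astar = astar"
    and \<delta>: "0 < \<delta>" "\<delta> < astar"
    and hyp: "\<forall>a\<in>{astar - \<delta>..1 - \<delta>}. f a \<ge> g (a + \<delta>) - \<delta>"
    and h_def: "\<And>a. h a = max (g (min (a + \<delta>) 1) - \<delta>) 0"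
    and dhat_def: "dhat = max (\<delta> / astar) ((1 - g \<delta>) + \<delta>)"
    and k_def: "\<And>a. k a = (if a \<le> 1 - dhat then (1 - dhat) * g (a / (1 - dhat)) else 0)"
  shows "is_tradeoff h \<and> symmetric_tradeoff h \<and> is_tradeoff k \<and> symmetric_tradeoff k
    \<and> (\<forall>a\<in>{0..1}. f a \<ge> h a \<and> h a \<ge> k a)
    \<and> (\<forall>a\<in>{0..1}. tradeoff (unif 0) (unif dhat) a = max (1 - a - dhat) 0)
    \<and> (\<forall>(P::'a measure) Q. prob_space P \<and> prob_space Q \<and> sets P = sets Q
         \<and> (\<forall>a\<in>{0..1}. tradeoff P Q a = g a) \<longrightarrow>
         (\<forall>a\<in>{0..1}. tradeoff (P \<Otimes>\<^sub>M unif 0) (Q \<Otimes>\<^sub>M unif dhat) a = k a))"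
  proof -
  have R: "is_tradeoff h \<and> symmetric_tradeoff h \<and> is_tradeoff k \<and> symmetric_tradeoff k
    \<and> (\<forall>a\<in>{0..1}. f a \<ge> h a \<and> h a \<ge> k a)"
    by (rule real_part[OF f_tr f_sym g_tr g_sym g_strict astar \<delta> hyp h_def dhat_def k_def])
  have gs: "astar < g \<delta>" using g_strict[rule_format, of \<delta> astar] \<delta> astar by auto
  have d1: "\<delta> / astar < 1" using \<delta> by simp
  have "0 < \<delta> / astar" using \<delta> by (intro divide_pos_pos) auto
  then have dpos: "0 < dhat" unfolding dhat_def by (simp add: less_max_iff_disj)
  have dlt: "dhat < 1" unfolding dhat_def using d1 gs \<delta> by auto
  have U: "\<forall>a\<in>{0..1}. tradeoff (unif 0) (unif dhat) a = max (1 - a - dhat) 0"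
    using unif_tradeoff dpos dlt by auto
  have PR: "\<forall>(P::'a measure) Q. prob_space P \<and> prob_space Q \<and> sets P = sets Q
         \<and> (\<forall>a\<in>{0..1}. tradeoff P Q a = g a) \<longrightarrow>
         (\<forall>a\<in>{0..1}. tradeoff (P \<Otimes>\<^sub>M unif 0) (Q \<Otimes>\<^sub>M unif dhat) a = k a)"
  proof (intro allI impI ballI)
    fix P Q :: "'a measure" and a :: real
    assume H: "prob_space P \<and> prob_space Q \<and> sets P = sets Q \<and> (\<forall>a\<in>{0..1}. tradeoff P Q a = g a)"
      and a: "a \<in> {0..1}"
    show "tradeoff (P \<Otimes>\<^sub>M unif 0) (Q \<Otimes>\<^sub>M unif dhat) a = k a"
      using prod_tradeoff[of P Q g dhat k a] H a dpos dlt k_def by auto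
  qed
  show ?thesis using R U PR by blast
qed

end
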